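(* A flow $v$ on a connected compact surface $S$ is minimal if and only if $\mathrm{LD}(v)=S$.
   Context: A surface is a two-dimensional paracompact manifold, possibly with boundary. A flow is a continuous $\mathbb{R}$-action $v$ on $S$; it is minimal if $S$ has no nonempty proper closed invariant subsets. A point is singular if fixed by the flow, periodic if non-singular with $v_T(x)=x$ for some $T>0$, closed if singular or periodic. An orbit is locally dense if its closure has nonempty interior; $\mathrm{LD}(v)$ is the union of non-closed locally dense orbits. *)

theory Defs
  imports "HOL-Analysis.Analysis"
begin

definition paracompact_space :: "'a topology \<Rightarrow> bool" where
  "paracompact_space X \<longleftrightarrow>
     (\<forall>\<U>. (\<forall>U\<in>\<U>. openin X U) \<and> topspace X \<subseteq> \<Union>\<U> \<longrightarrow>
        (\<exists>\<V>. (\<forall>V\<in>\<V>. openin X V) \<and> topspace X \<subseteq> \<Union>\<V> \<and>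
             (\<forall>V\<in>\<V>. \<exists>U\<in>\<U>. V \<subseteq> U) \<and>
             (\<forall>x\<in>topspace X. \<exists>W. openin X W \<and> x \<in> W \<and>
                   finite {V\<in>\<V>. V \<inter> W \<noteq> {}})))"

(* closed upper half-plane, the local model of a surface with boundary *)
definition half_plane :: "(real \<times> real) set" where
  "half_plane = {z. snd z \<ge> 0}"

definition surface :: "'a topology \<Rightarrow> bool" where
  "surface S \<longleftrightarrow> Hausdorff_space S \<and> paracompact_space S \<and>
     (\<forall>x\<in>topspace S. \<exists>U V. openin S U \<and> x \<in> U \<and>
         openin (top_of_set half_plane) V \<and>
         (subtopology S U) homeomorphic_space (top_of_set V))"

definition flow :: "(real \<Rightarrow> 'a \<Rightarrow> 'a) \<Rightarrow> 'a topology \<Rightarrow> bool" where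
  "flow v S \<longleftrightarrow> continuous_map (prod_topology euclideanreal S) S (\<lambda>(t, x). v t x) \<and>
     (\<forall>x\<in>topspace S. v 0 x = x) \<and>
     (\<forall>s t. \<forall>x\<in>topspace S. v (s + t) x = v s (v t x))"

definition orbit :: "(real \<Rightarrow> 'a \<Rightarrow> 'a) \<Rightarrow> 'a \<Rightarrow> 'a set" where
  "orbit v x = range (\<lambda>t. v t x)"

definition invariant :: "(real \<Rightarrow> 'a \<Rightarrow> 'a) \<Rightarrow> 'a set \<Rightarrow> bool" where
  "invariant v A \<longleftrightarrow> (\<forall>t. \<forall>x\<in>A. v t x \<in> A)"

definition minimal_flow :: "(real \<Rightarrow> 'a \<Rightarrow> 'a) \<Rightarrow> 'a topology \<Rightarrow> bool" where
  "minimal_flow v S \<longleftrightarrow>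
     \<not> (\<exists>A. A \<noteq> {} \<and> A \<subset> topspace S \<and> closedin S A \<and> invariant v A)"

definition singular_pt :: "(real \<Rightarrow> 'a \<Rightarrow> 'a) \<Rightarrow> 'a \<Rightarrow> bool" where
  "singular_pt v x \<longleftrightarrow> (\<forall>t. v t x = x)"

definition periodic_pt :: "(real \<Rightarrow> 'a \<Rightarrow> 'a) \<Rightarrow> 'a \<Rightarrow> bool" where
  "periodic_pt v x \<longleftrightarrow> \<not> singular_pt v x \<and> (\<exists>T>0. v T x = x)"

definition closed_pt :: "(real \<Rightarrow> 'a \<Rightarrow> 'a) \<Rightarrow> 'a \<Rightarrow> bool" where
  "closed_pt v x \<longleftrightarrow> singular_pt v x \<or> periodic_pt v x"

definition locally_dense_orbit :: "(real \<Rightarrow> 'a \<Rightarrow> 'a) \<Rightarrow> 'a topology \<Rightarrow> 'a \<Rightarrow> bool" where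
  "locally_dense_orbit v S x \<longleftrightarrow> S interior_of (S closure_of orbit v x) \<noteq> {}"

definition LD :: "(real \<Rightarrow> 'a \<Rightarrow> 'a) \<Rightarrow> 'a topology \<Rightarrow> 'a set" where
  "LD v S = \<Union>{orbit v x | x. x \<in> topspace S \<and> \<not> closed_pt v x \<and> locally_dense_orbit v S x}"

end

theory Submission
  imports Defs
begin

lemma flow_jcont:
  assumes "flow v S"
  shows "continuous_map (prod_topology euclideanreal S) S (\<lambda>(t, x). v t x)"
  using assms by (simp add: flow_def)

lemma flow_cont:
  assumes "flow v S"
  shows "continuous_map S S (v t)"
proof -
  have p: "continuous_map S (prod_topology euclideanreal S) (\<lambda>x. (t, x))"
    using continuous_map_id[of S] by (intro continuous_map_pairedI) (simp_all add: id_def)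
  have "continuous_map S S ((\<lambda>(t, x). v t x) \<circ> (\<lambda>x. (t, x)))"
    by (rule continuous_map_compose[OF p flow_jcont[OF assms]])
  moreover have "((\<lambda>(t, x). v t x) \<circ> (\<lambda>x. (t, x))) = v t" by (rule ext) simp
  ultimately show ?thesis by simp
qed

lemma flow_orbit_cont:
  assumes "flow v S" "x \<in> topspace S"
  shows "continuous_map euclideanreal S (\<lambda>t. v t x)"
proof -
  have p: "continuous_map euclideanreal (prod_topology euclideanreal S) (\<lambda>t. (t, x))"
    using continuous_map_id[of euclideanreal] assms(2) by (intro continuous_map_pairedI) (simp_all add: id_def)
  have "continuous_map euclideanreal S ((\<lambda>(t, x). v t x) \<circ> (\<lambda>t. (t, x)))"
    by (rule continuous_map_compose[OF p flow_jcont[OF assms(1)]])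
  moreover have "((\<lambda>(t, x). v t x) \<circ> (\<lambda>t. (t, x))) = (\<lambda>t. v t x)" by (rule ext) simp
  ultimately show ?thesis by simp
qed

lemma flow_in:
  assumes "flow v S" "x \<in> topspace S"
  shows "v t x \<in> topspace S"
  using continuous_map_image_subset_topspace[OF flow_cont[OF assms(1), of t]] assms(2) by blast

lemma flow_add:
  assumes "flow v S" "x \<in> topspace S"
  shows "v (s + t) x = v s (v t x)"
  using assms unfolding flow_def by blast

lemma flow_zero:
  assumes "flow v S" "x \<in> topspace S"
  shows "v 0 x = x"
  using assms unfolding flow_def by blast

lemma flow_inv:
  assumes "flow v S" "x \<in> topspace S"
  shows "v (-t) (v t x) = x"
  using flow_add[OF assms, of "-t" t] flow_zero[OF assms] by simp

lemma interior_invariant: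
  assumes "flow v S" "invariant v A" "A \<subseteq> topspace S"
  shows "invariant v (S interior_of A)"
  unfolding invariant_def
proof (intro allI ballI)
  fix t y assume y: "y \<in> S interior_of A"
  define W where "W = {z \<in> topspace S. v (-t) z \<in> S interior_of A}"
  have oW: "openin S W" unfolding W_def
    by (rule openin_continuous_map_preimage[OF flow_cont[OF assms(1)] openin_interior_of])
  have iA: "S interior_of A \<subseteq> A" by (rule interior_of_subset)
  have yt: "y \<in> topspace S" using subsetD[OF iA y] assms(3) by auto
  have "W \<subseteq> A"
  proof
    fix z assume "z \<in> W"
    then have z: "z \<in> topspace S" "v (-t) z \<in> A" unfolding W_def using iA by auto
    have "v t (v (-t) z) \<in> A" using z(2) assms(2) unfolding invariant_def by simp
    moreover have "v t (v (-t) z) = z" using flow_inv[OF assms(1) z(1), of "-t"] by simp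
    ultimately show "z \<in> A" by simp
  qed
  moreover have "v t y \<in> W" unfolding W_def using flow_in[OF assms(1) yt] flow_inv[OF assms(1) yt] y by simp
  ultimately show "v t y \<in> S interior_of A" using interior_of_maximal[OF _ oW] by auto
qed

lemma closure_invariant:
  assumes "flow v S" "invariant v A" "A \<subseteq> topspace S"
  shows "invariant v (S closure_of A)"
  unfolding invariant_def
proof (intro allI ballI)
  fix t y assume y: "y \<in> S closure_of A"
  have 1: "v t ` (S closure_of A) \<subseteq> S closure_of (v t ` A)"
    by (rule continuous_map_image_closure_subset[OF flow_cont[OF assms(1)]])
  have "v t ` A \<subseteq> A" using assms(2) unfolding invariant_def by blast
  then have 2: "S closure_of (v t ` A) \<subseteq> S closure_of A" by (rule closure_of_mono)
  show "v t y \<in> S closure_of A" using 1 2 y by blast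
qed

lemma orbit_invariant:
  assumes "flow v S" "x \<in> topspace S"
  shows "invariant v (orbit v x)" "orbit v x \<subseteq> topspace S" "x \<in> orbit v x"
proof -
  show "invariant v (orbit v x)" unfolding invariant_def orbit_def
  proof (intro allI ballI)
    fix t y assume "y \<in> range (\<lambda>t. v t x)"
    then obtain s where "y = v s x" by blast
    then have "v t y = v (t + s) x" using flow_add[OF assms] by simp
    then show "v t y \<in> range (\<lambda>t. v t x)" by blast
  qed
  show "orbit v x \<subseteq> topspace S" unfolding orbit_def using flow_in[OF assms] by blast
  show "x \<in> orbit v x" unfolding orbit_def using flow_zero[OF assms] by (metis range_eqI)
qed

lemma orbit_same:
  assumes "flow v S" "x \<in> topspace S" "y \<in> orbit v x"
  shows "orbit v y = orbit v x"
proof -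
  obtain s where s: "y = v s x" using assms(3) unfolding orbit_def by blast
  have "v t y = v (t + s) x" for t using flow_add[OF assms(1,2)] s by simp
  have "v t x = v (t - s) y" for t using flow_add[OF assms(1,2), of "t - s" s] s by simp
  have a: "v t y \<in> range (\<lambda>t. v t x)" for t using \<open>\<And>t. v t y = v (t + s) x\<close> by (metis rangeI)
  have b: "v t x \<in> range (\<lambda>t. v t y)" for t using \<open>\<And>t. v t x = v (t - s) y\<close> by (metis rangeI)
  have "range (\<lambda>t. v t y) \<subseteq> range (\<lambda>t. v t x)"
  proof
    fix z assume "z \<in> range (\<lambda>t. v t y)"
    then obtain t where "z = v t y" by blast
    then show "z \<in> range (\<lambda>t. v t x)" using a by simp
  qed
  moreover have "range (\<lambda>t. v t x) \<subseteq> range (\<lambda>t. v t y)"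
  proof
    fix z assume "z \<in> range (\<lambda>t. v t x)"
    then obtain t where "z = v t x" by blast
    then show "z \<in> range (\<lambda>t. v t y)" using b by simp
  qed
  ultimately show ?thesis unfolding orbit_def by (rule subset_antisym)
qed

lemma LD_imp_minimal:
  assumes "connected_space S" "flow v S" "LD v S = topspace S"
  shows "minimal_flow v S"
  unfolding minimal_flow_def
proof
  assume "\<exists>A. A \<noteq> {} \<and> A \<subset> topspace S \<and> closedin S A \<and> invariant v A"
  then obtain A where A: "A \<noteq> {}" "A \<subset> topspace S" "closedin S A" "invariant v A" by auto
  define B where "B = A - S interior_of A"
  have iA: "S interior_of A \<subseteq> A" by (rule interior_of_subset)
  have "B \<noteq> {}"
  proof
    assume "B = {}"
    then have "A = S interior_of A" unfolding B_def using iA by auto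
    then have "openin S A" by (metis openin_interior_of)
    then have "A = {} \<or> A = topspace S"
      using assms(1) A(3) unfolding connected_space_clopen_in by simp
    then show False using A(1,2) by auto
  qed
  then obtain y where y: "y \<in> B" by auto
  have yt: "y \<in> topspace S" using y A(2) unfolding B_def by auto
  have Bcl: "closedin S B" unfolding B_def using A(3) by (simp add: closedin_diff)
  have Ai: "invariant v (S interior_of A)" using interior_invariant[OF assms(2) A(4)] A(2) by auto
  have Binv: "invariant v B" unfolding invariant_def
  proof (intro allI ballI)
    fix t z assume z: "z \<in> B"
    then have zA: "z \<in> A" "z \<notin> S interior_of A" unfolding B_def by auto
    have zt: "z \<in> topspace S" using zA(1) A(2) by auto
    have "v t z \<in> A" using zA(1) A(4) unfolding invariant_def by simp
    moreover have "v t z \<notin> S interior_of A"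
    proof
      assume "v t z \<in> S interior_of A"
      then have "v (-t) (v t z) \<in> S interior_of A" using Ai unfolding invariant_def by simp
      then show False using flow_inv[OF assms(2) zt] zA(2) by simp
    qed
    ultimately show "v t z \<in> B" unfolding B_def by simp
  qed
  have "y \<in> LD v S" using yt assms(3) by simp
  then obtain x where x: "y \<in> orbit v x" "x \<in> topspace S" "locally_dense_orbit v S x"
    unfolding LD_def by auto
  have oy: "orbit v y = orbit v x" using orbit_same[OF assms(2) x(2) x(1)] .
  have "orbit v y \<subseteq> B"
  proof
    fix z assume "z \<in> orbit v y"
    then obtain t where "z = v t y" unfolding orbit_def by auto
    then show "z \<in> B" using Binv y unfolding invariant_def by simp
  qed
  then have "S closure_of orbit v y \<subseteq> B" using Bcl by (simp add: closure_of_minimal)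
  then have 1: "S interior_of (S closure_of orbit v y) \<subseteq> S interior_of B" by (rule interior_of_mono)
  have "S interior_of B \<subseteq> S interior_of A" unfolding B_def by (intro interior_of_mono) auto
  moreover have "S interior_of B \<subseteq> B" by (rule interior_of_subset)
  ultimately have 2: "S interior_of B = {}" unfolding B_def by auto
  show False using x(3) oy 1 2 unfolding locally_dense_orbit_def by auto
qed

lemma flow_mult_nat:
  assumes "flow v S" "x \<in> topspace S" "v T x = x"
  shows "v (real n * T) x = x"
proof (induction n)
  case 0
  then show ?case using flow_zero[OF assms(1,2)] by simp
next
  case (Suc n)
  have "v (real (Suc n) * T) x = v (T + real n * T) x" by (simp add: algebra_simps)
  also have "\<dots> = v T (v (real n * T) x)" by (rule flow_add[OF assms(1,2)])
  also have "\<dots> = x" using Suc assms(3) by simp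
  finally show ?case .
qed

lemma flow_mult_int:
  assumes "flow v S" "x \<in> topspace S" "v T x = x"
  shows "v (of_int k * T) x = x"
proof (cases "k \<ge> 0")
  case True
  obtain n where "k = int n" by (rule nonneg_int_cases[OF True])
  then show ?thesis using flow_mult_nat[OF assms, of n] by simp
next
  case False
  define n where "n = nat (- k)"
  have n: "k = - int n" unfolding n_def using False by simp
  have "v (- (real n * T)) (v (real n * T) x) = x" by (rule flow_inv[OF assms(1,2)])
  then show ?thesis using flow_mult_nat[OF assms, of n] n by simp
qed

lemma flow_shift:
  assumes "flow v S" "x \<in> topspace S" "v T x = x"
  shows "v (s + of_int k * T) x = v s x"
  using flow_add[OF assms(1,2), of s "of_int k * T"] flow_mult_int[OF assms, of k] by simp

lemma period_min:
  assumes "flow v S" "x \<in> topspace S" "Hausdorff_space S" "periodic_pt v x"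
  shows "\<exists>T>0. v T x = x \<and> (\<forall>t. 0 < t \<and> t < T \<longrightarrow> v t x \<noteq> x)"
proof -
  define P where "P = {t. v t x = x}"
  have "closedin euclideanreal {t \<in> topspace euclideanreal. v t x \<in> {x}}"
    by (rule closedin_continuous_map_preimage[OF flow_orbit_cont[OF assms(1,2)] closedin_Hausdorff_singleton[OF assms(3,2)]])
  then have cP: "closed P" unfolding P_def closed_closedin by simp
  obtain T0 where T0: "T0 > 0" "v T0 x = x" using assms(4) unfolding periodic_pt_def by auto
  have ns: "\<not> singular_pt v x" using assms(4) unfolding periodic_pt_def by auto
  define Q where "Q = P \<inter> {0<..}"
  have Qne: "Q \<noteq> {}" using T0 unfolding Q_def P_def by auto
  have Qbdd: "bdd_below Q" unfolding Q_def by (rule bdd_belowI[of _ 0]) auto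
  define T where "T = Inf Q"
  have T0le: "T \<ge> 0" unfolding T_def using Qne by (intro cInf_greatest) (auto simp: Q_def)
  show ?thesis
  proof (cases "T > 0")
    case True
    have "T \<in> closure Q" unfolding T_def by (rule closure_contains_Inf[OF Qne Qbdd])
    moreover have "closure Q \<subseteq> P" using cP unfolding Q_def by (simp add: closure_minimal)
    ultimately have "v T x = x" unfolding P_def by auto
    moreover have "v t x \<noteq> x" if "0 < t" "t < T" for t
    proof
      assume "v t x = x"
      then have "t \<in> Q" using that unfolding Q_def P_def by auto
      then have "T \<le> t" unfolding T_def using Qbdd by (rule cInf_lower)
      then show False using that by simp
    qed
    ultimately show ?thesis using True by auto
  next
    case False
    then have T00: "T = 0" using T0le by simp
    have "s \<in> P" for s
    proof -
      have "\<exists>y\<in>P. dist y s < e" if e: "e > 0" for e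
      proof -
        have "Inf Q < e" using T00 e unfolding T_def by simp
        then obtain t where t: "t \<in> Q" "t < e" using cInf_less_iff[OF Qne Qbdd] by auto
        then have tp: "t > 0" "v t x = x" unfolding Q_def P_def by auto
        define k where "k = \<lfloor>s / t\<rfloor>"
        have k1: "of_int k \<le> s / t" "s / t < of_int k + 1" unfolding k_def by linarith+
        then have "of_int k * t \<le> s" "s < of_int k * t + t" using tp(1)
          by (simp_all add: field_simps)
        then have "dist (of_int k * t) s < e" using t(2) by (simp add: dist_real_def)
        moreover have "of_int k * t \<in> P" unfolding P_def using flow_mult_int[OF assms(1,2) tp(2)] by simp
        ultimately show ?thesis by auto
      qed
      then show ?thesis using closed_approachable[OF cP, of s] by auto
    qed
    then have "singular_pt v x" unfolding singular_pt_def P_def by simp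
    then show ?thesis using ns by simp
  qed
qed

lemma half_plane_ball:
  assumes "openin (top_of_set half_plane) V" "z \<in> V"
  shows "\<exists>c r. r > 0 \<and> ball c r \<subseteq> V"
proof -
  obtain T where T: "open T" "V = half_plane \<inter> T" using assms(1) unfolding openin_open by auto
  have zT: "z \<in> T" "snd z \<ge> 0" using assms(2) T(2) unfolding half_plane_def by auto
  obtain e where e: "e > 0" "ball z e \<subseteq> T" using T(1) zT(1) unfolding open_contains_ball by auto
  define c where "c = (fst z, snd z + e / 2)"
  have "ball c (e / 2) \<subseteq> V"
  proof
    fix y assume y: "y \<in> ball c (e / 2)"
    have dzc: "dist z c = e / 2" unfolding c_def using e(1)
      by (cases z) (simp add: dist_Pair_Pair dist_real_def)
    have "dist z y \<le> dist z c + dist c y" by (rule dist_triangle)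
    then have "dist z y < e" using y dzc by (simp add: dist_commute)
    then have "y \<in> T" using e(2) by auto
    moreover have "dist (snd c) (snd y) \<le> dist c y" by (rule dist_snd_le)
    then have "snd y \<ge> 0" using y zT(2) unfolding c_def by (simp add: dist_real_def dist_commute)
    ultimately show "y \<in> V" using T(2) unfolding half_plane_def by auto
  qed
  then show ?thesis using e(1) by (intro exI[of _ c] exI[of _ "e/2"]) auto
qed

lemma surface_embed:
  assumes "surface S" "x \<in> topspace S" "openin S Ob" "x \<in> Ob"
  shows "\<exists>(c::real\<times>real) r g. r > 0 \<and> continuous_map (top_of_set (ball c r)) S g \<and>
            g ` ball c r \<subseteq> Ob \<and> inj_on g (ball c r)"
proof -
  obtain U V where U: "openin S U" "x \<in> U" "openin (top_of_set half_plane) V"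
      "(subtopology S U) homeomorphic_space (top_of_set V)"
    using assms(1,2) unfolding surface_def by auto
  obtain f g where hm: "homeomorphic_maps (subtopology S U) (top_of_set V) f g"
    using U(4) unfolding homeomorphic_space_def by auto
  have cf: "continuous_map (subtopology S U) (top_of_set V) f"
   and cg: "continuous_map (top_of_set V) (subtopology S U) g"
   and gf: "\<And>y. y \<in> topspace S \<inter> U \<Longrightarrow> g (f y) = y"
   and fg: "\<And>z. z \<in> V \<Longrightarrow> f (g z) = z"
    using hm unfolding homeomorphic_maps_def by auto
  have fx: "f x \<in> V"
    using continuous_map_image_subset_topspace[OF cf] assms(2) U(2) by auto
  define V' where "V' = {z \<in> topspace (top_of_set V). g z \<in> Ob \<inter> U}"
  have "openin (subtopology S U) (Ob \<inter> U)" unfolding openin_subtopology using assms(3) by auto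
  then have oV': "openin (top_of_set V) V'" unfolding V'_def
    by (rule openin_continuous_map_preimage[OF cg])
  have oV'': "openin (top_of_set half_plane) V'" by (rule openin_trans[OF oV' U(3)])
  have "f x \<in> V'" unfolding V'_def using fx gf[of x] assms(2,4) U(2) by auto
  then have "\<exists>c r. r > 0 \<and> ball c r \<subseteq> V'" by (rule half_plane_ball[OF oV''])
  then obtain c r where cr: "r > 0" "ball c r \<subseteq> V'" by blast
  have bV: "ball c r \<subseteq> V" using cr(2) unfolding V'_def by auto
  have "continuous_map (subtopology (top_of_set V) (ball c r)) (subtopology S U) g"
    by (rule continuous_map_from_subtopology[OF cg])
  moreover have "subtopology (top_of_set V) (ball c r) = top_of_set (ball c r)"
    using bV by (simp add: subtopology_subtopology Int_absorb1)
  ultimately have "continuous_map (top_of_set (ball c r)) (subtopology S U) g" by simp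
  then have c1: "continuous_map (top_of_set (ball c r)) S g" by (rule continuous_map_into_fulltopology)
  have c2: "g ` ball c r \<subseteq> Ob" using cr(2) unfolding V'_def by auto
  have c3: "inj_on g (ball c r)"
  proof (rule inj_onI)
    fix a b assume ab: "a \<in> ball c r" "b \<in> ball c r" "g a = g b"
    then have "f (g a) = f (g b)" by simp
    moreover have "a \<in> V" "b \<in> V" using ab(1,2) bV by auto
    ultimately show "a = b" using fg[of a] fg[of b] by simp
  qed
  show ?thesis using cr(1) c1 c2 c3 by blast
qed

lemma no_embed:
  fixes F :: "real \<times> real \<Rightarrow> real"
  assumes "r > 0" "continuous_on (ball c r) F" "inj_on F (ball c r)"
  shows False
proof -
  have "ball c r \<noteq> {}" using assms(1) by auto
  then have "DIM(real \<times> real) \<le> DIM(real)"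
    using invariance_of_dimension[OF assms(2) open_ball assms(3)] by blast
  then show False by simp
qed

lemma period_inj:
  assumes "flow v S" "x \<in> topspace S" "\<forall>t. 0 < t \<and> t < T \<longrightarrow> v t x \<noteq> x"
    "v a x = v b x" "a < b" "b - a < T"
  shows False
proof -
  have "v (-a + b) x = v (-a) (v b x)" by (rule flow_add[OF assms(1,2)])
  also have "\<dots> = v (-a) (v a x)" using assms(4) by simp
  also have "\<dots> = x" by (rule flow_inv[OF assms(1,2)])
  finally have "v (b - a) x = x" by simp
  then show False using assms(3,5,6) by auto
qed

lemma orbit_reduce:
  assumes "flow v S" "x \<in> topspace S" "v T x = x" "T > 0"
  shows "\<exists>s'. 0 \<le> s' \<and> s' < T \<and> v s x = v s' x"
proof -
  define k where "k = \<lfloor>s / T\<rfloor>"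
  have k1: "of_int k \<le> s / T" "s / T < of_int k + 1" unfolding k_def by linarith+
  then have k2: "of_int k * T \<le> s" "s < of_int k * T + T" using assms(4)
    by (simp_all add: field_simps)
  define s' where "s' = s - of_int k * T"
  have "v s x = v (s' + of_int k * T) x" unfolding s'_def by simp
  also have "\<dots> = v s' x" by (rule flow_shift[OF assms(1-3)])
  finally show ?thesis using k2 unfolding s'_def by (intro exI[of _ "s - of_int k * T"]) auto
qed

lemma closed_orbit_False:
  assumes "surface S" "flow v S" "x \<in> topspace S" "orbit v x = topspace S" "closed_pt v x"
  shows False
proof -
  have H: "Hausdorff_space S" using assms(1) unfolding surface_def by auto
  show False
  proof (cases "singular_pt v x")
    case True
    have tS: "topspace S = {x}" using assms(4) True unfolding orbit_def singular_pt_def by auto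
    obtain c :: "real \<times> real" and r g where cr: "r > 0" "continuous_map (top_of_set (ball c r)) S g"
        "g ` ball c r \<subseteq> topspace S" "inj_on g (ball c r)"
      using surface_embed[OF assms(1,3) openin_topspace assms(3)] by blast
    have "inj_on (\<lambda>z. 0::real) (ball c r)"
    proof (rule inj_onI)
      fix a b assume ab: "a \<in> ball c r" "b \<in> ball c r"
      have "g a \<in> {x}" "g b \<in> {x}" using ab cr(3) tS by (auto simp del: mem_ball)
      then have "g a = g b" by simp
      then show "a = b" using cr(4) ab by (simp add: inj_on_def)
    qed
    then show False by (rule no_embed[OF cr(1) continuous_on_const])
  next
    case False
    then have per: "periodic_pt v x" using assms(5) unfolding closed_pt_def by simp
    obtain T where T: "T > 0" "v T x = x" "\<forall>t. 0 < t \<and> t < T \<longrightarrow> v t x \<noteq> x"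
      using period_min[OF assms(2,3) H per] by auto
    define p where "p = (\<lambda>t. v t x)"
    have cp: "continuous_map euclideanreal S p" unfolding p_def by (rule flow_orbit_cont[OF assms(2,3)])
    define J where "J = {-T/3..T/3}"
    define K where "K = p ` J"
    have KS: "K \<subseteq> topspace S" unfolding K_def p_def using flow_in[OF assms(2,3)] by auto
    have injp: "inj_on p J"
    proof (rule inj_onI)
      fix a b assume ab: "a \<in> J" "b \<in> J" "p a = p b"
      show "a = b"
      proof (rule ccontr)
        assume "a \<noteq> b"
        then have "a < b \<or> b < a" by auto
        then show False
        proof
          assume "a < b"
          then show False using period_inj[OF assms(2,3) T(3), of a b] ab T(1) unfolding p_def J_def by auto
        next
          assume "b < a"
          then show False using period_inj[OF assms(2,3) T(3), of b a] ab T(1) unfolding p_def J_def by auto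
        qed
      qed
    qed
    have cJ: "continuous_map (top_of_set J) S p" by (rule continuous_map_from_subtopology[OF cp])
    have c1: "continuous_map (top_of_set J) (subtopology S K) p"
      unfolding continuous_map_in_subtopology using cJ unfolding K_def by auto
    have c2: "compact_space (top_of_set J)" unfolding J_def
      by (rule compact_space_subtopology) simp
    have c3: "Hausdorff_space (subtopology S K)" using H by (rule Hausdorff_space_subtopology)
    have c4: "p ` topspace (top_of_set J) = topspace (subtopology S K)"
      using KS unfolding K_def by auto
    have "homeomorphic_map (top_of_set J) (subtopology S K) p"
      using continuous_imp_homeomorphic_map[OF c1 c2 c3 c4] injp by simp
    then obtain q where hq: "homeomorphic_maps (top_of_set J) (subtopology S K) p q"
      unfolding homeomorphic_map_maps by auto
    have cq: "continuous_map (subtopology S K) (top_of_set J) q"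
     and pq: "\<And>y. y \<in> topspace S \<inter> K \<Longrightarrow> p (q y) = y"
      using hq unfolding homeomorphic_maps_def by auto
    have cq': "continuous_map (subtopology S K) euclideanreal q"
      by (rule continuous_map_into_fulltopology[OF cq])
    define C where "C = p ` {T/3..2*T/3}"
    have "compactin S C" unfolding C_def by (rule image_compactin[OF _ cp]) simp
    then have "closedin S C" by (rule compactin_imp_closedin[OF H])
    then have oOb: "openin S (topspace S - C)" by (rule openin_diff[OF openin_topspace])
    have xOb: "x \<in> topspace S - C"
    proof -
      have "x \<notin> C"
      proof
        assume "x \<in> C"
        then obtain s where s: "s \<in> {T/3..2*T/3}" "x = v s x" unfolding C_def p_def by auto
        have "0 < s" "s < T" using s(1) T(1) by auto
        then have "v s x \<noteq> x" using T(3) by blast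
        then show False using s(2) by simp
      qed
      then show ?thesis using assms(3) by simp
    qed
    have ObK: "topspace S - C \<subseteq> K"
    proof
      fix y assume y: "y \<in> topspace S - C"
      then have "y \<in> orbit v x" using assms(4) by simp
      then obtain s where s: "y = v s x" unfolding orbit_def by auto
      obtain s' where s': "0 \<le> s'" "s' < T" "v s x = v s' x" using orbit_reduce[OF assms(2,3) T(2,1)] by auto
      have ys: "y = p s'" using s s'(3) unfolding p_def by simp
      show "y \<in> K"
      proof (cases "s' \<le> T/3")
        case True
        then show ?thesis unfolding K_def J_def using ys s'(1) T(1) by auto
      next
        case False
        show ?thesis
        proof (cases "s' \<ge> 2*T/3")
          case True
          have "p (s' + of_int (-1) * T) = p s'" unfolding p_def by (rule flow_shift[OF assms(2,3) T(2)])
          then have "p (s' - T) = y" using ys by simp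
          moreover have "s' - T \<in> J" unfolding J_def using True s'(2) by auto
          ultimately show ?thesis unfolding K_def by (rule image_eqI[OF sym])
        next
          case False2: False
          then have "y \<in> C" unfolding C_def using ys False by auto
          then show ?thesis using y by simp
        qed
      qed
    qed
    obtain c :: "real \<times> real" and r g where cr: "r > 0" "continuous_map (top_of_set (ball c r)) S g"
        "g ` ball c r \<subseteq> topspace S - C" "inj_on g (ball c r)"
      using surface_embed[OF assms(1,3) oOb xOb] by blast
    have gK: "g ` ball c r \<subseteq> K" using cr(3) ObK by auto
    have "continuous_map (top_of_set (ball c r)) (subtopology S K) g"
      unfolding continuous_map_in_subtopology using cr(2) gK by auto
    then have "continuous_map (top_of_set (ball c r)) euclideanreal (q \<circ> g)"
      by (rule continuous_map_compose[OF _ cq'])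
    then have cF: "continuous_on (ball c r) (q \<circ> g)" by simp
    have iF: "inj_on (q \<circ> g) (ball c r)"
    proof (rule inj_onI)
      fix a b assume ab: "a \<in> ball c r" "b \<in> ball c r" "(q \<circ> g) a = (q \<circ> g) b"
      have ga: "g a \<in> topspace S \<inter> K" "g b \<in> topspace S \<inter> K" using ab(1,2) cr(3) gK by (auto simp del: mem_ball)
      have "g a = p (q (g a))" using pq[OF ga(1)] by simp
      also have "\<dots> = p (q (g b))" using ab(3) by simp
      also have "\<dots> = g b" using pq[OF ga(2)] by simp
      finally show "a = b" using cr(4) ab(1,2) by (simp add: inj_on_def)
    qed
    show False by (rule no_embed[OF cr(1) cF iF])
  qed
qed

lemma closed_orbit_closed:
  assumes "flow v S" "x \<in> topspace S" "Hausdorff_space S" "closed_pt v x"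
  shows "closedin S (orbit v x)"
proof (cases "singular_pt v x")
  case True
  then have "orbit v x = {x}" unfolding orbit_def singular_pt_def by auto
  then show ?thesis using closedin_Hausdorff_singleton[OF assms(3,2)] by simp
next
  case False
  then have "periodic_pt v x" using assms(4) unfolding closed_pt_def by simp
  then obtain T where T: "T > 0" "v T x = x" unfolding periodic_pt_def by auto
  have "orbit v x = (\<lambda>t. v t x) ` {0..T}"
  proof
    show "orbit v x \<subseteq> (\<lambda>t. v t x) ` {0..T}"
    proof
      fix y assume "y \<in> orbit v x"
      then obtain s where s: "y = v s x" unfolding orbit_def by auto
      obtain s' where s': "0 \<le> s'" "s' < T" "v s x = v s' x"
        using orbit_reduce[OF assms(1,2) T(2,1)] by auto
      show "y \<in> (\<lambda>t. v t x) ` {0..T}" using s s' by (intro image_eqI[of _ _ s']) auto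
    qed
    show "(\<lambda>t. v t x) ` {0..T} \<subseteq> orbit v x" unfolding orbit_def by auto
  qed
  moreover have "compactin S ((\<lambda>t. v t x) ` {0..T})"
    by (rule image_compactin[OF _ flow_orbit_cont[OF assms(1,2)]]) simp
  ultimately show ?thesis using compactin_imp_closedin[OF assms(3)] by simp
qed

theorem lemma4p1:
  fixes S :: "'a topology" and v :: "real \<Rightarrow> 'a \<Rightarrow> 'a"
  assumes "surface S" and "connected_space S" and "compact_space S" and "flow v S"
  shows "minimal_flow v S \<longleftrightarrow> LD v S = topspace S"
proof
  assume mf: "minimal_flow v S"
  have H: "Hausdorff_space S" using assms(1) unfolding surface_def by auto
  have all: "A = topspace S" if "A \<noteq> {}" "closedin S A" "invariant v A" for A
  proof -
    have "A \<subseteq> topspace S" using that(2) by (rule closedin_subset)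
    moreover have "\<not> A \<subset> topspace S" using mf that unfolding minimal_flow_def by auto
    ultimately show ?thesis by auto
  qed
  show "LD v S = topspace S"
  proof
    show "LD v S \<subseteq> topspace S"
    proof
      fix y assume "y \<in> LD v S"
      then obtain x where x: "y \<in> orbit v x" "x \<in> topspace S" unfolding LD_def by auto
      then show "y \<in> topspace S" using orbit_invariant(2)[OF assms(4) x(2)] by auto
    qed
    show "topspace S \<subseteq> LD v S"
    proof
      fix y assume y: "y \<in> topspace S"
      have oi: "invariant v (orbit v y)" "orbit v y \<subseteq> topspace S" "y \<in> orbit v y"
        using orbit_invariant[OF assms(4) y] by auto
      have nc: "\<not> closed_pt v y"
      proof
        assume c: "closed_pt v y"
        have "orbit v y = topspace S"
          using all[OF _ closed_orbit_closed[OF assms(4) y H c] oi(1)] oi(3) by auto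
        then show False using closed_orbit_False[OF assms(1,4) y _ c] by simp
      qed
      have "orbit v y \<subseteq> S closure_of orbit v y" using oi(2) by (rule closure_of_subset)
      then have ne: "S closure_of orbit v y \<noteq> {}" using oi(3) by auto
      have "S closure_of orbit v y = topspace S"
        by (rule all[OF ne closedin_closure_of closure_invariant[OF assms(4) oi(1,2)]])
      then have ld: "locally_dense_orbit v S y" unfolding locally_dense_orbit_def using y by auto
      show "y \<in> LD v S" unfolding LD_def using y nc ld oi(3) by auto
    qed
  qed
next
  assume "LD v S = topspace S"
  then show "minimal_flow v S" by (rule LD_imp_minimal[OF assms(2,4)])
qed

end
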